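(* Let $H\in\mathbb{R}^{n\times d}$ have rank $h$, $\Sigma\in\mathbb{R}^{n\times n}$ symmetric positive definite, $\Gamma_0$ the empirical covariance of an initial ensemble, $G_0=\Gamma_0$ and $G_{i+1}=(I+G_iH^\top\Sigma^{-1}H)^{-1}G_i$. Fix $i\ge0$, and let $\tilde w_1,\dots,\tilde w_n$, $r$, $\tilde\delta_{\ell,i}$ be as in the context. For $\ell=1,\dots,r$ let $\tilde u_\ell=\frac1{\tilde\delta_{\ell,i}}G_iH^\top\tilde w_\ell$, and for $\ell=r+1,\dots,h$ let $\tilde u_\ell=H^+\Sigma\tilde w_\ell$. Then for all $\ell\le h$, $G_iH^\top\Sigma^{-1}H\tilde u_\ell=\tilde\delta_{\ell,i}\tilde u_\ell$, and conversely $\tilde w_\ell=\Sigma^{-1}H\tilde u_\ell$.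
   Context: $H^+=(H^\top\Sigma^{-1}H)^\dagger H^\top\Sigma^{-1}$, $\dagger$ the Moore–Penrose pseudoinverse. $\Gamma_0=\frac1{J-1}\sum_j(v_0^{(j)}-\bar v_0)(v_0^{(j)}-\bar v_0)^\top$. Let $C_i=HG_iH^\top$, $r$ the number of positive eigenvalues of the pencil $(C_i,\Sigma)$, and $\tilde w_1,\dots,\tilde w_n$ a $\Sigma$-orthogonal basis of $\mathbb{R}^n$ of generalized eigenvectors, $C_i\tilde w_\ell=\tilde\delta_{\ell,i}\Sigma\tilde w_\ell$, with $\tilde w_1,\dots,\tilde w_r\in\mathsf{Ran}(\Sigma^{-1}H)$ having positive eigenvalues, $\tilde w_{r+1},\dots,\tilde w_h\in\mathsf{Ran}(\Sigma^{-1}H)$ eigenvalue zero, $\tilde w_{h+1},\dots,\tilde w_n\in\mathsf{Ker}(H^\top)$. *)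

theory Defs
  imports "HOL-Analysis.Analysis"
begin

definition mp_pinv :: "real^'m^'k \<Rightarrow> real^'k^'m" where
  "mp_pinv A = (THE X. A ** X ** A = A \<and> X ** A ** X = X \<and>
       transpose (A ** X) = A ** X \<and> transpose (X ** A) = X ** A)"

definition outer :: "real^'a \<Rightarrow> real^'b \<Rightarrow> real^'b^'a" where
  "outer u v = (\<chi> a b. u $ a * v $ b)"

definition ens_mean :: "nat \<Rightarrow> (nat \<Rightarrow> real^'d) \<Rightarrow> real^'d" where
  "ens_mean J v = (1 / real J) *\<^sub>R (\<Sum>j\<in>{1..J}. v j)"

definition emp_cov :: "nat \<Rightarrow> (nat \<Rightarrow> real^'d) \<Rightarrow> real^'d^'d" where
  "emp_cov J v = (1 / (real J - 1)) *\<^sub>R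
     (\<Sum>j\<in>{1..J}. outer (v j - ens_mean J v) (v j - ens_mean J v))"

definition spd :: "real^'n^'n \<Rightarrow> bool" where
  "spd S \<longleftrightarrow> transpose S = S \<and> (\<forall>x. x \<noteq> 0 \<longrightarrow> x \<bullet> (S *v x) > 0)"

end

theory Submission
  imports Defs
begin


lemma sym_inner:
  fixes M :: "real^'n^'n"
  assumes "transpose M = M"
  shows "x \<bullet> (M *v y) = (M *v x) \<bullet> y"
proof -
  have "M *v x = x v* M" by (metis assms vector_transpose_matrix)
  thus ?thesis by (simp add: dot_lmul_matrix)
qed

lemma transpose_inner:
  fixes M :: "real^'n^'m"
  shows "x \<bullet> (transpose M *v y) = (M *v x) \<bullet> y"
  by (metis dot_lmul_matrix inner_commute vector_transpose_matrix transpose_matrix_vector)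

lemma mp_unique:
  fixes A :: "real^'m^'k"
  assumes "A ** X ** A = A" "X ** A ** X = X" "transpose (A ** X) = A ** X" "transpose (X ** A) = X ** A"
   "A ** Y ** A = A" "Y ** A ** Y = Y" "transpose (A ** Y) = A ** Y" "transpose (Y ** A) = Y ** A"
  shows "X = Y"
proof -
  have tA: "transpose A = transpose A ** transpose Y ** transpose A"
    by (metis assms(5) matrix_transpose_mul matrix_mul_assoc)
  have tA2: "transpose A = transpose A ** transpose X ** transpose A"
    by (metis assms(1) matrix_transpose_mul matrix_mul_assoc)
  have "X = X ** (A ** X)" by (metis assms(2) matrix_mul_assoc)
  also have "\<dots> = X ** (transpose X ** transpose A)" by (metis assms(3) matrix_transpose_mul)
  also have "\<dots> = X ** transpose X ** (transpose A ** transpose Y ** transpose A)" by (metis tA matrix_mul_assoc)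
  also have "\<dots> = X ** (transpose (A ** X)) ** transpose (A ** Y)" by (simp add: matrix_transpose_mul matrix_mul_assoc)
  also have "\<dots> = X ** A ** X ** A ** Y" by (simp add: assms(3,7) matrix_mul_assoc)
  also have "\<dots> = X ** A ** Y" by (simp add: assms(2))
  finally have 1: "X = X ** A ** Y" .
  have "Y = (Y ** A) ** Y" by (metis assms(6))
  also have "\<dots> = (transpose A ** transpose Y) ** Y" by (metis assms(8) matrix_transpose_mul)
  also have "\<dots> = (transpose A ** transpose X ** transpose A) ** transpose Y ** Y" by (metis tA2 matrix_mul_assoc)
  also have "\<dots> = transpose (X ** A) ** transpose (Y ** A) ** Y" by (simp add: matrix_transpose_mul matrix_mul_assoc)
  also have "\<dots> = X ** A ** Y ** A ** Y" by (simp add: assms(4,8) matrix_mul_assoc)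
  also have "\<dots> = X ** A ** Y" by (metis assms(6) matrix_mul_assoc)
  finally show ?thesis using 1 by simp
qed

lemma mv_neg: "(A::real^'n^'m) *v (- x) = - (A *v x)"
  using matrix_vector_mult_diff_distrib[of A 0 x] by simp

lemma mp_exists_sym:
  fixes A :: "real^'d^'d"
  assumes symA: "transpose A = A"
  shows "\<exists>X. A ** X ** A = A \<and> X ** A ** X = X \<and>
       transpose (A ** X) = A ** X \<and> transpose (X ** A) = X ** A"
proof -
  let ?N = "{x. A *v x = 0}"
  have sub: "subspace ?N"
    by (auto simp: subspace_def matrix_vector_right_distrib matrix_vector_mult_scaleR)
  obtain B where BN: "B \<subseteq> ?N" and orth: "pairwise orthogonal B"
    and nrm: "\<And>x. x \<in> B \<Longrightarrow> norm x = 1" and ind: "independent B"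
    and "card B = dim ?N" and spB: "span B = ?N"
    using orthonormal_basis_subspace[OF sub] by metis
  have finB: "finite B" using ind independent_imp_finite by blast
  define Q :: "real^'d^'d" where "Q = (\<chi> i j. \<Sum>b\<in>B. b $ i * b $ j)"
  have Qv: "Q *v y = (\<Sum>b\<in>B. (b \<bullet> y) *\<^sub>R b)" for y
  proof -
    have "(Q *v y)$i = (\<Sum>b\<in>B. (b \<bullet> y) *\<^sub>R b)$i" for i
    proof -
      have "(Q *v y)$i = (\<Sum>j\<in>UNIV. \<Sum>b\<in>B. b$i * b$j * y$j)"
        by (simp add: Q_def matrix_vector_mult_def sum_distrib_right)
      also have "\<dots> = (\<Sum>b\<in>B. \<Sum>j\<in>UNIV. b$i * b$j * y$j)" by (rule sum.swap)
      also have "\<dots> = (\<Sum>b\<in>B. (b \<bullet> y) *\<^sub>R b)$i"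
        by (simp add: inner_vec_def sum_component sum_distrib_left sum_distrib_right mult_ac)
      finally show ?thesis .
    qed
    thus ?thesis by (simp add: vec_eq_iff)
  qed
  have symQ: "transpose Q = Q"
    unfolding Q_def transpose_def by (simp add: vec_eq_iff mult_ac)
  have bb: "b \<bullet> b = 1" if "b \<in> B" for b
    using nrm[OF that] by (simp add: norm_eq_1)
  have bc: "b \<bullet> c = 0" if "b \<in> B" "c \<in> B" "b \<noteq> c" for b c
    using orth that unfolding pairwise_def orthogonal_def by blast
  have bQ: "b \<bullet> (Q *v y) = b \<bullet> y" if "b \<in> B" for b y
  proof -
    have "b \<bullet> (Q *v y) = (\<Sum>c\<in>B. (c \<bullet> y) * (b \<bullet> c))"
      by (simp add: Qv inner_sum_right)
    also have "\<dots> = (\<Sum>c\<in>{b}. (c \<bullet> y) * (b \<bullet> c))"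
      using that finB bc by (intro sum.mono_neutral_right) auto
    also have "\<dots> = b \<bullet> y" using bb[OF that] by simp
    finally show ?thesis .
  qed
  have QN: "Q *v y \<in> ?N" for y
  proof -
    have "Q *v y \<in> span B" unfolding Qv
      by (intro span_sum span_mul span_base) auto
    thus ?thesis using spB by simp
  qed
  have AQ: "A *v (Q *v y) = 0" for y using QN[of y] by simp
  have Qn: "Q *v n = n" if "A *v n = 0" for n
  proof -
    have nsp: "n \<in> span B" using that spB by simp
    have o0: "orthogonal (n - Q *v n) c" if "c \<in> B" for c
      using bQ[OF that] that unfolding orthogonal_def by (simp add: inner_diff inner_commute)
    have qsp: "Q *v n \<in> span B" using QN[of n] spB by simp
    have o1: "orthogonal (n - Q *v n) n" "orthogonal (n - Q *v n) (Q *v n)"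
      using orthogonal_to_span[OF nsp o0] orthogonal_to_span[OF qsp o0] by auto
    hence "orthogonal (n - Q *v n) (n - Q *v n)"
      unfolding orthogonal_def by (simp add: inner_diff_right)
    thus ?thesis by (simp add: orthogonal_self)
  qed
  have QQ: "Q *v (Q *v y) = Q *v y" for y using Qn[OF AQ] .
  have QA: "Q *v (A *v y) = 0" for y
  proof -
    have "z \<bullet> (Q *v (A *v y)) = 0" for z
    proof -
      have "z \<bullet> (Q *v (A *v y)) = (Q *v z) \<bullet> (A *v y)" by (simp add: sym_inner[OF symQ])
      also have "\<dots> = (A *v (Q *v z)) \<bullet> y" by (simp add: sym_inner[OF symA])
      finally show ?thesis by (simp add: AQ)
    qed
    from this[of "Q *v (A *v y)"] show ?thesis by simp
  qed
  define M where "M = A + Q"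
  have Mv: "M *v x = A *v x + Q *v x" for x by (simp add: M_def matrix_vector_mult_add_rdistrib)
  have ker: "x = 0" if "M *v x = 0" for x
  proof -
    have 1: "A *v x = - (Q *v x)" using that Mv[of x] by (simp add: eq_neg_iff_add_eq_0)
    have "Q *v (A *v x) = - (Q *v (Q *v x))" by (simp add: 1 mv_neg)
    then have 2: "Q *v x = 0" using QA QQ by (metis neg_equal_0_iff_equal)
    hence "A *v x = 0" using 1 by simp
    thus ?thesis using Qn 2 by metis
  qed
  obtain Mi where MiM: "Mi ** M = mat 1"
    using matrix_left_invertible_ker[of M] ker by blast
  hence MMi: "M ** Mi = mat 1" using matrix_left_right_inverse by blast
  have MiMv: "Mi *v (M *v y) = y" for y by (simp add: matrix_vector_mul_assoc MiM)
  have MMiv: "M *v (Mi *v y) = y" for y by (simp add: matrix_vector_mul_assoc MMi)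
  have MiQ: "Mi *v (Q *v y) = Q *v y" for y
    using MiMv[of "Q *v y"] by (simp add: Mv AQ QQ)
  have QMi: "Q *v (Mi *v y) = Q *v y" for y
  proof -
    have "Q *v (M *v z) = Q *v z" for z by (simp add: Mv QA QQ matrix_vector_right_distrib)
    from this[of "Mi *v y"] show ?thesis by (simp add: MMiv)
  qed
  define X where "X = Mi - Q"
  have Xv: "X *v y = Mi *v y - Q *v y" for y by (simp add: X_def matrix_vector_mult_diff_rdistrib)
  have AX: "A ** X = mat 1 - Q"
  proof -
    have "A *v (Mi *v y) = y - Q *v y" for y
      using Mv[of "Mi *v y"] by (simp add: MMiv QMi algebra_simps)
    thus ?thesis
      by (simp add: matrix_eq matrix_vector_mul_assoc[symmetric] Xv matrix_vector_mult_diff_distrib AQ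
          matrix_vector_mult_diff_rdistrib)
  qed
  have XA: "X ** A = mat 1 - Q"
  proof -
    have "Mi *v (A *v y) = y - Q *v y" for y
    proof -
      have "A *v y = M *v y - Q *v y" by (simp add: Mv)
      thus ?thesis by (simp add: matrix_vector_mult_diff_distrib MiMv MiQ)
    qed
    thus ?thesis
      by (simp add: matrix_eq matrix_vector_mul_assoc[symmetric] Xv QA
          matrix_vector_mult_diff_rdistrib)
  qed
  have tr: "transpose (mat 1 - Q) = mat 1 - Q"
    using symQ unfolding transpose_def by (simp add: vec_eq_iff mat_def)
  have 1: "A ** X ** A = A"
    by (simp add: AX matrix_eq matrix_vector_mul_assoc[symmetric] matrix_vector_mult_diff_rdistrib QA)
  have 2: "X ** A ** X = X"
    by (simp add: XA matrix_eq matrix_vector_mul_assoc[symmetric] matrix_vector_mult_diff_rdistrib Xv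
        matrix_vector_mult_diff_distrib QMi QQ)
  have 3: "transpose (A ** X) = A ** X" using AX tr by simp
  have 4: "transpose (X ** A) = X ** A" using XA tr by simp
  show ?thesis using 1 2 3 4 by blast
qed



lemma mp_pinv_prop:
  fixes A :: "real^'d^'d" assumes "transpose A = A"
  shows "A ** mp_pinv A ** A = A"
proof -
  obtain X where X: "A ** X ** A = A \<and> X ** A ** X = X \<and> transpose (A ** X) = A ** X \<and> transpose (X ** A) = X ** A"
    using mp_exists_sym[OF assms] by blast
  have "mp_pinv A = X" unfolding mp_pinv_def
    apply (rule the_equality)
     apply (rule X)
    using X mp_unique by metis
  thus ?thesis using X by simp
qed

lemma transpose_add': "transpose (A + B) = transpose A + transpose (B::real^'n^'m)"
  by (simp add: transpose_def vec_eq_iff)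

lemma psd_zero:
  fixes G :: "real^'d^'d"
  assumes symG: "transpose G = G" and psd: "\<And>x. x \<bullet> (G *v x) \<ge> 0" and z: "z \<bullet> (G *v z) = 0"
  shows "G *v z = 0"
proof -
  define y where "y = G *v z"
  define a where "a = y \<bullet> y"
  define b where "b = y \<bullet> (G *v y)"
  have b0: "b \<ge> 0" using psd b_def by simp
  define t where "t = - a / (b + 1)"
  have zy: "z \<bullet> (G *v y) = a" unfolding a_def y_def by (simp add: sym_inner[OF symG])
  have yz: "y \<bullet> (G *v z) = a" unfolding a_def y_def by simp
  have "0 \<le> (z + t *\<^sub>R y) \<bullet> (G *v (z + t *\<^sub>R y))" by (rule psd)
  also have "\<dots> = z \<bullet> (G *v z) + t * (z \<bullet> (G *v y)) + t * (y \<bullet> (G *v z)) + t * t * (y \<bullet> (G *v y))"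
    by (simp add: matrix_vector_right_distrib matrix_vector_mult_scaleR inner_add_left inner_add_right distrib_left)
  also have "\<dots> = 2 * t * a + t^2 * b" by (simp add: zy yz z b_def power2_eq_square)
  finally have 1: "0 \<le> 2 * t * a + t^2 * b" .
  have tb: "t * (b + 1) = - a" unfolding t_def using b0 by simp
  have "(2 * t * a + t^2 * b) * (b + 1)^2 = 2 * a * (t * (b + 1)) * (b + 1) + b * (t * (b + 1))^2"
    by (simp add: algebra_simps power2_eq_square)
  also have "\<dots> = - (a^2 * (b + 2))" unfolding tb by (simp add: algebra_simps power2_eq_square)
  finally have key: "(2 * t * a + t^2 * b) * (b + 1)^2 = - (a^2 * (b + 2))" .
  have "0 \<le> (2 * t * a + t^2 * b) * (b + 1)^2" using 1 by simp
  hence "a^2 * (b + 2) \<le> 0" using key by simp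
  hence "a = 0" using b0
    by (smt (verit) mult_pos_pos zero_less_power2)
  thus ?thesis unfolding a_def y_def by simp
qed

lemma psd_step:
  fixes G B :: "real^'d^'d"
  assumes symG: "transpose G = G" and psdG: "\<And>x. x \<bullet> (G *v x) \<ge> 0"
    and symB: "transpose B = B" and psdB: "\<And>x. x \<bullet> (B *v x) \<ge> 0"
    and kerB: "\<And>x. x \<bullet> (B *v x) = 0 \<Longrightarrow> B *v x = 0"
  shows "transpose (matrix_inv (mat 1 + G ** B) ** G) = matrix_inv (mat 1 + G ** B) ** G \<and>
         (\<forall>x. x \<bullet> ((matrix_inv (mat 1 + G ** B) ** G) *v x) \<ge> 0)"
proof -
  define N where "N = mat 1 + G ** B"
  have Nv: "N *v x = x + G *v (B *v x)" for x
    by (simp add: N_def matrix_vector_mult_add_rdistrib matrix_vector_mul_assoc)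
  have ker: "x = 0" if "N *v x = 0" for x
  proof -
    have "(B *v x) \<bullet> (x + G *v (B *v x)) = 0" using that Nv[of x] by simp
    hence "(B *v x) \<bullet> x = - ((B *v x) \<bullet> (G *v (B *v x)))" by (simp add: inner_add_right)
    moreover have "(B *v x) \<bullet> (G *v (B *v x)) \<ge> 0" by (rule psdG)
    moreover have "x \<bullet> (B *v x) \<ge> 0" by (rule psdB)
    ultimately have "x \<bullet> (B *v x) = 0" by (simp add: inner_commute)
    hence "B *v x = 0" by (rule kerB)
    thus ?thesis using that Nv[of x] by simp
  qed
  obtain Ni where NiN: "Ni ** N = mat 1"
    using matrix_left_invertible_ker[of N] ker by blast
  hence NNi: "N ** Ni = mat 1" using matrix_left_right_inverse by blast
  define Mi where "Mi = matrix_inv N"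
  have inv: "N ** Mi = mat 1 \<and> Mi ** N = mat 1"
    unfolding Mi_def matrix_inv_def by (rule someI[of _ Ni]) (simp add: NiN NNi)
  define T where "T = transpose Mi"
  have tN: "transpose N = mat 1 + B ** G"
    by (simp add: N_def transpose_add' matrix_transpose_mul symG symB)
  have TN: "T ** transpose N = mat 1" unfolding T_def
    by (metis inv matrix_transpose_mul transpose_mat)
  have NT: "transpose N ** T = mat 1" unfolding T_def
    by (metis inv matrix_transpose_mul transpose_mat)
  have GN: "G ** transpose N = N ** G"
    unfolding tN unfolding N_def by (simp add: matrix_eq matrix_vector_mul_assoc[symmetric] matrix_vector_mult_add_rdistrib matrix_vector_right_distrib)
  have MiG: "Mi ** G = G ** T"
  proof -
    have "Mi ** G = Mi ** G ** (transpose N ** T)" by (simp add: NT)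
    also have "\<dots> = Mi ** (G ** transpose N) ** T" by (simp add: matrix_mul_assoc)
    also have "\<dots> = (Mi ** N) ** G ** T" by (simp add: GN matrix_mul_assoc)
    also have "\<dots> = G ** T" using inv by simp
    finally show ?thesis .
  qed
  have sym: "transpose (Mi ** G) = Mi ** G"
    by (simp add: MiG matrix_transpose_mul symG T_def)
  have psd: "x \<bullet> ((Mi ** G) *v x) \<ge> 0" for x
  proof -
    define y where "y = T *v x"
    have xy: "x = y + B *v (G *v y)"
    proof -
      have "x = transpose N *v y" by (simp add: y_def matrix_vector_mul_assoc NT)
      thus ?thesis by (simp add: tN matrix_vector_mult_add_rdistrib matrix_vector_mul_assoc)
    qed
    have "(Mi ** G) *v x = G *v y" by (simp add: MiG y_def matrix_vector_mul_assoc)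
    hence "x \<bullet> ((Mi ** G) *v x) = y \<bullet> (G *v y) + (B *v (G *v y)) \<bullet> (G *v y)"
      by (metis xy inner_add_left)
    moreover have "(B *v (G *v y)) \<bullet> (G *v y) \<ge> 0" using psdB by (simp add: inner_commute)
    ultimately show ?thesis using psdG[of y] by simp
  qed
  show ?thesis using sym psd unfolding Mi_def N_def by blast
qed



lemma emp_cov_psd:
  assumes "2 \<le> J"
  shows "transpose (emp_cov J v) = emp_cov J v \<and> (\<forall>x. x \<bullet> (emp_cov J v *v x) \<ge> 0)"
proof -
  define m where "m = ens_mean J v"
  define c where "c = 1 / (real J - 1)"
  define d where "d j = v j - m" for j
  have c0: "c \<ge> 0" using assms unfolding c_def by simp
  have E: "emp_cov J v = c *\<^sub>R (\<Sum>j\<in>{1..J}. outer (d j) (d j))"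
    by (simp add: emp_cov_def c_def d_def m_def)
  have sym: "transpose (emp_cov J v) = emp_cov J v"
    unfolding E transpose_def outer_def by (simp add: vec_eq_iff sum_component mult.commute)
  have Ev: "emp_cov J v *v x = c *\<^sub>R (\<Sum>j\<in>{1..J}. (d j \<bullet> x) *\<^sub>R d j)" for x
  proof -
    have "(emp_cov J v *v x)$i = (c *\<^sub>R (\<Sum>j\<in>{1..J}. (d j \<bullet> x) *\<^sub>R d j))$i" for i
    proof -
      have "(emp_cov J v *v x)$i = (\<Sum>k\<in>UNIV. \<Sum>j\<in>{1..J}. c * (d j $ i * d j $ k * x $ k))"
        by (simp add: E outer_def matrix_vector_mult_def sum_component sum_distrib_left sum_distrib_right mult_ac)
      also have "\<dots> = (\<Sum>j\<in>{1..J}. \<Sum>k\<in>UNIV. c * (d j $ i * d j $ k * x $ k))" by (rule sum.swap)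
      also have "\<dots> = (c *\<^sub>R (\<Sum>j\<in>{1..J}. (d j \<bullet> x) *\<^sub>R d j))$i"
        by (simp add: inner_vec_def sum_component sum_distrib_left sum_distrib_right mult_ac)
      finally show ?thesis .
    qed
    thus ?thesis by (simp add: vec_eq_iff)
  qed
  have "x \<bullet> (emp_cov J v *v x) \<ge> 0" for x
  proof -
    have "x \<bullet> (emp_cov J v *v x) = c * (\<Sum>j\<in>{1..J}. (d j \<bullet> x)^2)"
      by (simp add: Ev inner_sum_right inner_commute power2_eq_square)
    also have "\<dots> \<ge> 0" using c0 by (simp add: sum_nonneg)
    finally show ?thesis .
  qed
  thus ?thesis using sym by blast
qed

theorem proposition4p9:
  fixes H :: "real^'d^'n" and Sigma :: "real^'n^'n"
    and J :: nat and v0 :: "nat \<Rightarrow> real^'d"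
    and G :: "nat \<Rightarrow> real^'d^'d"
    and i h r :: nat
    and w :: "nat \<Rightarrow> real^'n" and delta :: "nat \<Rightarrow> real"
    and u :: "nat \<Rightarrow> real^'d"
  assumes rankH: "rank H = h"
    and Sigma_spd: "spd Sigma"
    and J2: "2 \<le> J"
    and G0: "G 0 = emp_cov J v0"
    and GSuc: "\<And>k. G (Suc k) =
        matrix_inv (mat 1 + G k ** transpose H ** matrix_inv Sigma ** H) ** G k"
    and w_nz: "\<And>l. l \<in> {1..CARD('n)} \<Longrightarrow> w l \<noteq> 0"
    and w_orth: "\<And>k l. k \<in> {1..CARD('n)} \<Longrightarrow> l \<in> {1..CARD('n)} \<Longrightarrow> k \<noteq> l \<Longrightarrow>
        w k \<bullet> (Sigma *v w l) = 0"
    and w_span: "span (w ` {1..CARD('n)}) = UNIV"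
    and w_eig: "\<And>l. l \<in> {1..CARD('n)} \<Longrightarrow>
        (H ** G i ** transpose H) *v w l = delta l *\<^sub>R (Sigma *v w l)"
    and r_def: "r = card {l \<in> {1..CARD('n)}. delta l > 0}"
    and r_le_h: "r \<le> h"
    and w_pos: "\<And>l. l \<in> {1..r} \<Longrightarrow>
        delta l > 0 \<and> w l \<in> range (\<lambda>x. (matrix_inv Sigma ** H) *v x)"
    and w_zero: "\<And>l. l \<in> {r+1..h} \<Longrightarrow>
        delta l = 0 \<and> w l \<in> range (\<lambda>x. (matrix_inv Sigma ** H) *v x)"
    and w_ker: "\<And>l. l \<in> {h+1..CARD('n)} \<Longrightarrow> transpose H *v w l = 0"
    and u_pos: "\<And>l. l \<in> {1..r} \<Longrightarrow>
        u l = (1 / delta l) *\<^sub>R ((G i ** transpose H) *v w l)"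
    and u_zero: "\<And>l. l \<in> {r+1..h} \<Longrightarrow>
        u l = (mp_pinv (transpose H ** matrix_inv Sigma ** H) ** transpose H ** matrix_inv Sigma)
              *v (Sigma *v w l)"
  shows "\<forall>l \<in> {1..h}.
     (G i ** transpose H ** matrix_inv Sigma ** H) *v u l = delta l *\<^sub>R u l \<and>
     w l = (matrix_inv Sigma ** H) *v u l"
proof -
  define Si where "Si = matrix_inv Sigma"
  have symS: "transpose Sigma = Sigma" and posS: "\<And>x. x \<noteq> 0 \<Longrightarrow> x \<bullet> (Sigma *v x) > 0"
    using Sigma_spd unfolding spd_def by auto
  have kerS: "x = 0" if "Sigma *v x = 0" for x using posS[of x] that by force
  obtain S' where S'1: "S' ** Sigma = mat 1" using matrix_left_invertible_ker[of Sigma] kerS by blast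
  hence S'2: "Sigma ** S' = mat 1" using matrix_left_right_inverse by blast
  have invS: "Sigma ** Si = mat 1 \<and> Si ** Sigma = mat 1"
    unfolding Si_def matrix_inv_def by (rule someI[of _ S']) (simp add: S'1 S'2)
  have SSi: "Sigma *v (Si *v y) = y" for y by (simp add: matrix_vector_mul_assoc invS)
  have SiS: "Si *v (Sigma *v y) = y" for y by (simp add: matrix_vector_mul_assoc invS)
  have symSi: "transpose Si = Si"
  proof -
    have 1: "transpose Si ** Sigma = mat 1" by (metis invS matrix_transpose_mul symS transpose_mat)
    have "transpose Si = transpose Si ** (Sigma ** Si)" using invS by simp
    also have "\<dots> = Si" by (metis 1 matrix_mul_assoc matrix_mul_lid)
    finally show ?thesis .
  qed
  have Siq: "y \<bullet> (Si *v y) \<ge> 0 \<and> (y \<bullet> (Si *v y) = 0 \<longrightarrow> y = 0)" for y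
  proof -
    define z where "z = Si *v y"
    have yz: "y = Sigma *v z" by (simp add: z_def SSi)
    have e: "y \<bullet> (Si *v y) = z \<bullet> (Sigma *v z)" by (simp add: yz SiS inner_commute)
    show ?thesis
    proof (cases "z = 0")
      case True thus ?thesis using e yz by simp
    next
      case False thus ?thesis using e posS[OF False] by simp
    qed
  qed
  define Bm where "Bm = transpose H ** Si ** H"
  have Bmv: "Bm *v x = transpose H *v (Si *v (H *v x))" for x
    unfolding Bm_def by (metis matrix_vector_mul_assoc)
  have quad: "x \<bullet> (Bm *v x) = (H *v x) \<bullet> (Si *v (H *v x))" for x
    unfolding Bmv by (rule transpose_inner)
  have symBm: "transpose Bm = Bm" unfolding Bm_def
    by (simp add: matrix_transpose_mul symSi matrix_mul_assoc)
  have psdBm: "x \<bullet> (Bm *v x) \<ge> 0" for x using quad Siq by simp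
  have kerH: "H *v x = 0" if "x \<bullet> (Bm *v x) = 0" for x using quad[of x] Siq[of "H *v x"] that by simp
  have kerBm: "Bm *v x = 0" if "x \<bullet> (Bm *v x) = 0" for x
    using kerH[OF that] Bmv[of x] by simp
  have Gk: "transpose (G k) = G k \<and> (\<forall>x. x \<bullet> (G k *v x) \<ge> 0)" for k
  proof (induction k)
    case 0 show ?case using emp_cov_psd[OF J2] G0 by simp
  next
    case (Suc k)
    have "G (Suc k) = matrix_inv (mat 1 + G k ** Bm) ** G k"
      using GSuc[of k] by (simp add: Bm_def Si_def matrix_mul_assoc)
    thus ?case using psd_step[of "G k" Bm] Suc.IH symBm psdBm kerBm by simp
  qed
  have symG: "transpose (G i) = G i" and psdG: "\<And>x. x \<bullet> (G i *v x) \<ge> 0" using Gk[of i] by auto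
  have rn: "r \<le> CARD('n)"
  proof -
    have "r \<le> card {1..CARD('n)}" unfolding r_def by (rule card_mono) auto
    thus ?thesis by simp
  qed
  have hn: "h \<le> CARD('n)" using rank_bound[of H] rankH by simp
  have Kv: "(G i ** transpose H ** Si ** H) *v y = G i *v (transpose H *v (Si *v (H *v y)))" for y
    by (metis matrix_vector_mul_assoc)
  show ?thesis
  proof
    fix l assume l: "l \<in> {1..h}"
    have ln: "l \<in> {1..CARD('n)}" using l hn by auto
    have eig: "H *v (G i *v (transpose H *v w l)) = delta l *\<^sub>R (Sigma *v w l)"
      using w_eig[OF ln] by (metis matrix_vector_mul_assoc)
    have "(G i ** transpose H ** Si ** H) *v u l = delta l *\<^sub>R u l \<and> w l = (Si ** H) *v u l"
    proof (cases "l \<le> r")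
      case True
      hence lr: "l \<in> {1..r}" using l by auto
      have dpos: "delta l > 0" using w_pos[OF lr] by simp
      have u: "u l = (1 / delta l) *\<^sub>R (G i *v (transpose H *v w l))"
        using u_pos[OF lr] by (metis matrix_vector_mul_assoc)
      have c2: "Si *v (H *v u l) = w l"
        unfolding u using dpos
        by (simp del: transpose_matrix_vector add: matrix_vector_mult_scaleR eig SiS)
      have c1: "(G i ** transpose H ** Si ** H) *v u l = delta l *\<^sub>R u l"
        unfolding Kv c2 unfolding u using dpos by simp
      show ?thesis using c1 c2 by (metis matrix_vector_mul_assoc)
    next
      case False
      hence lz: "l \<in> {r+1..h}" using l by auto
      have d0: "delta l = 0" using w_zero[OF lz] by simp
      obtain x0 where "w l = (Si ** H) *v x0" using w_zero[OF lz] unfolding Si_def by blast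
      hence wx: "w l = Si *v (H *v x0)" by (metis matrix_vector_mul_assoc)
      have Htw: "transpose H *v w l = Bm *v x0" by (simp only: Bmv wx)
      have u: "u l = mp_pinv Bm *v (Bm *v x0)"
      proof -
        have "u l = (mp_pinv Bm ** transpose H ** Si) *v (Sigma *v w l)"
          using u_zero[OF lz] by (simp add: Bm_def Si_def)
        also have "\<dots> = mp_pinv Bm *v (transpose H *v (Si *v (Sigma *v w l)))"
          by (metis matrix_vector_mul_assoc)
        also have "\<dots> = mp_pinv Bm *v (Bm *v x0)" by (simp only: SiS Htw)
        finally show ?thesis .
      qed
      have "Bm *v u l = Bm *v x0"
        unfolding u using mp_pinv_prop[OF symBm] by (metis matrix_vector_mul_assoc)
      hence "Bm *v (u l - x0) = 0" by (simp add: matrix_vector_mult_diff_distrib)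
      hence "H *v (u l - x0) = 0" using kerH by simp
      hence Hu: "H *v u l = H *v x0" by (simp add: matrix_vector_mult_diff_distrib)
      have c2: "Si *v (H *v u l) = w l" by (simp only: Hu wx)
      define z where "z = transpose H *v w l"
      have "z \<bullet> (G i *v z) = w l \<bullet> (H *v (G i *v z))"
        unfolding z_def by (metis transpose_inner inner_commute)
      also have "\<dots> = 0" unfolding z_def eig d0 by simp
      finally have "G i *v z = 0" using psd_zero[OF symG psdG] by blast
      hence c1: "(G i ** transpose H ** Si ** H) *v u l = delta l *\<^sub>R u l"
        unfolding Kv c2 d0 z_def by simp
      show ?thesis using c1 c2 by (metis matrix_vector_mul_assoc)
    qed
    thus "(G i ** transpose H ** matrix_inv Sigma ** H) *v u l = delta l *\<^sub>R u l \<and>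
     w l = (matrix_inv Sigma ** H) *v u l" unfolding Si_def .
  qed
qed

end
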